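(* For every integer $p\ge 1$, the edge set of $K_{4p,4p,4p}\times K_2$ can be partitioned into $2p+1$ planar subgraphs; in particular $\theta(K_{4p,4p,4p}\times K_2)\le 2p+1$.
   Context: The thickness $\theta(G)$ of a graph $G$ is the minimum number of planar subgraphs whose union is $G$. The Kronecker product $G\times H$ of graphs $G$ and $H$ is the graph with vertex set $V(G)\times V(H)$ in which $(g,h)$ and $(g',h')$ are adjacent if and only if $gg'\in E(G)$ and $hh'\in E(H)$. $K_{n,n,n}$ denotes the complete tripartite graph with three parts of size $n$. *)

theory Defs
  imports "HOL-Analysis.Analysis"
begin

definition simple_graph :: "'a set \<Rightarrow> 'a set set \<Rightarrow> bool" where
  "simple_graph V E \<longleftrightarrow> finite V \<and> (\<forall>e\<in>E. \<exists>u v. e = {u, v} \<and> u \<noteq> v \<and> u \<in> V \<and> v \<in> V)"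

definition planar_graph :: "'a set \<Rightarrow> 'a set set \<Rightarrow> bool" where
  "planar_graph V E \<longleftrightarrow>
     (\<exists>(pos :: 'a \<Rightarrow> real^2) (crv :: 'a set \<Rightarrow> real \<Rightarrow> real^2).
        inj_on pos V \<and>
        (\<forall>e\<in>E. \<exists>u v. e = {u, v} \<and> u \<noteq> v \<and> arc (crv e) \<and>
                 pathstart (crv e) = pos u \<and> pathfinish (crv e) = pos v) \<and>
        (\<forall>e\<in>E. \<forall>w\<in>V. pos w \<in> path_image (crv e) \<longrightarrow> w \<in> e) \<and>
        (\<forall>e\<in>E. \<forall>e'\<in>E. e \<noteq> e' \<longrightarrow>
             path_image (crv e) \<inter> path_image (crv e') \<subseteq> pos ` (e \<inter> e')))"

definition thickness :: "'a set \<Rightarrow> 'a set set \<Rightarrow> nat" where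
  "thickness V E = (LEAST k. \<exists>Es :: nat \<Rightarrow> 'a set set.
      (\<forall>i<k. Es i \<subseteq> E \<and> planar_graph V (Es i)) \<and> (\<Union>i<k. Es i) = E)"

definition kron_vertices :: "'a set \<Rightarrow> 'b set \<Rightarrow> ('a \<times> 'b) set" where
  "kron_vertices VG VH = VG \<times> VH"

definition kron_edges :: "'a set set \<Rightarrow> 'b set set \<Rightarrow> ('a \<times> 'b) set set" where
  "kron_edges EG EH = {{(g, h), (g', h')} | g h g' h'. {g, g'} \<in> EG \<and> {h, h'} \<in> EH}"

definition Knnn_vertices :: "nat \<Rightarrow> (nat \<times> nat) set" where
  "Knnn_vertices n = {0..<3} \<times> {0..<n}"

definition Knnn_edges :: "nat \<Rightarrow> (nat \<times> nat) set set" where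
  "Knnn_edges n = {{u, v} | u v. u \<in> Knnn_vertices n \<and> v \<in> Knnn_vertices n \<and> fst u \<noteq> fst v}"

definition K2_vertices :: "nat set" where "K2_vertices = {0, 1}"
definition K2_edges :: "nat set set" where "K2_edges = {{0, 1}}"

end

theory Submission
  imports Defs
begin

definition mk :: "real \<Rightarrow> real \<Rightarrow> real^2" where
  "mk x y = x *\<^sub>R axis 1 1 + y *\<^sub>R axis 2 1"

lemma mk_1[simp]: "mk x y $ 1 = x" and mk_2[simp]: "mk x y $ 2 = y"
  by (simp_all add: mk_def axis_def)

lemma mk_eq[simp]: "mk x y = mk x' y' \<longleftrightarrow> x = x' \<and> y = y'"
  by (metis mk_1 mk_2)

lemma continuous_on_mk[continuous_intros]:
  "continuous_on S f \<Longrightarrow> continuous_on S g \<Longrightarrow> continuous_on S (\<lambda>s. mk (f s) (g s))"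
  unfolding mk_def by (intro continuous_intros)

definition bcurve :: "real \<Rightarrow> real \<Rightarrow> bool \<Rightarrow> real \<Rightarrow> real^2" where
  "bcurve a b up s = mk (a + s*(b-a)) ((if up then 1 else -1) * (s*(b-a)) * ((1-s)*(b-a)))"

lemma arc_bcurve: "a < b \<Longrightarrow> arc (bcurve a b up)"
  unfolding arc_def path_def bcurve_def
  by (auto intro!: continuous_intros inj_onI)

lemma bcurve_start[simp]: "pathstart (bcurve a b up) = mk a 0"
  and bcurve_finish[simp]: "pathfinish (bcurve a b up) = mk b 0"
  by (simp_all add: pathstart_def pathfinish_def bcurve_def)

lemma bcurve_image:
  assumes "a < b" "z \<in> path_image (bcurve a b up)"
  shows "\<exists>x. a \<le> x \<and> x \<le> b \<and> z = mk x ((if up then 1 else -1) * ((x-a)*(b-x)))"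
proof -
  from assms obtain s where s: "0 \<le> s" "s \<le> 1" "z = bcurve a b up s"
    by (auto simp: path_image_def)
  have 1: "a \<le> a + s*(b-a)" using s assms by simp
  have 2: "a + s*(b-a) \<le> b"
  proof -
    have "s*(b-a) \<le> 1*(b-a)" using s assms by (intro mult_right_mono) auto
    thus ?thesis by simp
  qed
  have 3: "(if up then 1 else -1) * (s*(b-a)) * ((1-s)*(b-a)) = (if up then 1 else -1) * ((a + s*(b-a)) - a) * (b - (a + s*(b-a)))"
    by (simp add: algebra_simps)
  show ?thesis
    apply (rule exI[of _ "a + s*(b-a)"])
    using 1 2 s(3) unfolding bcurve_def by (simp only: 3) simp
qed


lemma two_arcs:
  fixes a b a' b' x s s' :: real
  assumes "a<b" "a'<b'" "a\<le>x" "x\<le>b" "a'\<le>x" "x\<le>b'"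
    and eq: "s*((x-a)*(b-x)) = s'*((x-a')*(b'-x))" and ss: "s \<in> {1,-1}" "s'\<in>{1,-1}"
    and n1: "s=s' \<Longrightarrow> \<not>(a<a' \<and> a'<b \<and> b<b')"
    and n2: "s=s' \<Longrightarrow> \<not>(a'<a \<and> a<b' \<and> b'<b)"
    and n3: "s=s' \<Longrightarrow> \<not>(a=a' \<and> b=b')"
  shows "(x=a \<or> x=b) \<and> (x=a' \<or> x=b')"
proof -
  have P: "(x-a)*(b-x) \<ge> 0" "(x-a')*(b'-x) \<ge> 0" using assms by simp_all
  have z: "(x-a)*(b-x) = 0 \<and> (x-a')*(b'-x) = 0"
  proof (cases "s = s'")
    case False
    then have "s = - s'" using ss by auto
    then have "(x-a)*(b-x) = - ((x-a')*(b'-x))" using eq ss by auto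
    then show ?thesis using P by linarith
  next
    case True
    then have e: "(x-a)*(b-x) = (x-a')*(b'-x)" using eq ss by auto
    note n = n1[OF True] n2[OF True] n3[OF True]
    show ?thesis
    proof (cases "a \<le> a'")
      case aa: True
      show ?thesis
      proof (cases "b \<le> b'")
        case bb: True
        show ?thesis
        proof (cases "a = a'")
          case True
          with n bb have "b < b'" by auto
          have "(x-a)*(b'-b) = 0" using e True by (simp add: algebra_simps)
          then have "x = a" using \<open>b<b'\<close> by simp
          then show ?thesis using True by simp
        next
          case False
          then have "a < a'" using aa by simp
          show ?thesis
          proof (cases "b = b'")
            case True
            have "(b-x)*(a'-a) = 0" using e True by (simp add: algebra_simps)
            then have "x = b" using \<open>a<a'\<close> by simp
            then show ?thesis using True by simp
          next
            case False
            then have "b < b'" using bb by simp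
            then have "b \<le> a'" using n \<open>a<a'\<close> by auto
            then have "x = b" "x = a'" using assms by auto
            then show ?thesis by simp
          qed
        qed
      next
        case bb: False
        have h1: "(x-a)*(b-x) \<ge> (x-a)*(b'-x)" using assms bb by (intro mult_left_mono) auto
        have h2: "(x-a)*(b'-x) \<ge> (x-a')*(b'-x)" using assms aa by (intro mult_right_mono) auto
        have "(x-a)*(b-x) = (x-a)*(b'-x)" using h1 h2 e by linarith
        then have "(x-a)*(b-b') = 0" by (simp add: algebra_simps)
        then have "x = a" using bb by simp
        then have "x = a'" using aa assms by simp
        then show ?thesis using \<open>x=a\<close> by simp
      qed
    next
      case aa: False
      show ?thesis
      proof (cases "b' \<le> b")
        case bb: True
        show ?thesis
        proof (cases "b = b'")
          case True
          have "(b-x)*(a-a') = 0" using e True by (simp add: algebra_simps)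
          then have "x = b" using aa by simp
          then show ?thesis using True by simp
        next
          case False
          then have "b' < b" using bb by simp
          then have "b' \<le> a" using n aa by auto
          then have "x = b'" "x = a" using assms by auto
          then show ?thesis by simp
        qed
      next
        case bb: False
        have h1: "(x-a')*(b'-x) \<ge> (x-a')*(b-x)" using assms bb by (intro mult_left_mono) auto
        have h2: "(x-a')*(b-x) \<ge> (x-a)*(b-x)" using assms aa by (intro mult_right_mono) auto
        have "(x-a')*(b'-x) = (x-a')*(b-x)" using h1 h2 e by linarith
        then have "(x-a')*(b'-b) = 0" by (simp add: algebra_simps)
        then have "x = a'" using bb by simp
        then have "x = a" using aa assms by simp
        then show ?thesis using \<open>x=a'\<close> by simp
      qed
    qed
  qed
  then show ?thesis by auto
qed


lemma book_planar:
  fixes f :: "'a \<Rightarrow> nat" and lo hi :: "'r \<Rightarrow> 'a" and pg :: "'r \<Rightarrow> bool"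
  assumes inj: "inj_on f V"
    and E: "E = (\<lambda>r. {lo r, hi r}) ` R"
    and ends: "\<And>r. r\<in>R \<Longrightarrow> lo r \<in> V \<and> hi r \<in> V \<and> f (lo r) < f (hi r)"
    and ni: "\<And>r r'. r\<in>R \<Longrightarrow> r'\<in>R \<Longrightarrow> pg r = pg r' \<Longrightarrow> f (lo r) < f (lo r')
               \<Longrightarrow> f (lo r') < f (hi r) \<Longrightarrow> f (hi r) < f (hi r') \<Longrightarrow> False"
  shows "planar_graph V E"
proof -
  define pos where "pos w = mk (real (f w)) 0" for w
  define rr where "rr e = (SOME r. r\<in>R \<and> e = {lo r, hi r})" for e
  define crv where "crv e = bcurve (real (f (lo (rr e)))) (real (f (hi (rr e)))) (pg (rr e))" for e
  have rr: "rr e \<in> R \<and> e = {lo (rr e), hi (rr e)}" if "e \<in> E" for e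
  proof -
    have "\<exists>r. r\<in>R \<and> e = {lo r, hi r}" using that E by auto
    then show ?thesis unfolding rr_def by (rule someI_ex)
  qed
  have EV: "e \<subseteq> V" if "e \<in> E" for e
  proof -
    from that obtain r where "r\<in>R" "e = {lo r, hi r}" unfolding E by blast
    then show ?thesis using ends by auto
  qed
  have injr: "u = w" if "u\<in>V" "w\<in>V" "real (f u) = real (f w)" for u w
    using inj that by (auto dest: inj_onD)
  have A: "inj_on pos V" using inj by (auto simp: inj_on_def pos_def)
  have B: "\<exists>u v. e = {u, v} \<and> u \<noteq> v \<and> arc (crv e) \<and>
                 pathstart (crv e) = pos u \<and> pathfinish (crv e) = pos v" if "e\<in>E" for e
  proof -
    have r: "rr e \<in> R" "e = {lo (rr e), hi (rr e)}"
      using rr[OF that] by (rule conjunct1, rule conjunct2)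
    from ends[OF r(1)] have lt: "real (f (lo (rr e))) < real (f (hi (rr e)))" by simp
    have neq: "lo (rr e) \<noteq> hi (rr e)" using ends[OF r(1)] by auto
    show ?thesis
      apply (rule exI[of _ "lo (rr e)"], rule exI[of _ "hi (rr e)"], intro conjI)
      apply (rule r(2))
      using lt neq by (simp_all add: crv_def pos_def arc_bcurve)
  qed
  have C: "w \<in> e" if "e\<in>E" "w\<in>V" "pos w \<in> path_image (crv e)" for e w
  proof -
    define q where "q = rr e"
    have r: "q \<in> R" "e = {lo q, hi q}"
      using rr[OF that(1)] unfolding q_def by (rule conjunct1, rule conjunct2)
    have ce: "crv e = bcurve (real (f (lo q))) (real (f (hi q))) (pg q)"
      by (simp add: crv_def q_def)
    note en = ends[OF r(1)]
    then have lt: "real (f (lo q)) < real (f (hi q))" by simp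
    from bcurve_image[OF lt, of "pos w" "pg q"] that(3)
    obtain x where x: "real (f (lo q)) \<le> x" "x \<le> real (f (hi q))"
      "pos w = mk x ((if pg q then 1 else -1) *
           ((x - real (f (lo q))) * (real (f (hi q)) - x)))"
      by (auto simp: ce)
    then have x1: "x = real (f w)" and x2: "(x - real (f (lo q))) * (real (f (hi q)) - x) = 0"
      by (auto simp: pos_def split: if_splits)
    from x2 have "x = real (f (lo q)) \<or> x = real (f (hi q))" by auto
    then consider "real (f w) = real (f (lo q))" | "real (f w) = real (f (hi q))"
      using x1 by metis
    then show ?thesis
    proof cases
      case 1
      have "w = lo q" by (rule injr[OF that(2) conjunct1[OF en] 1])
      then show ?thesis using r(2) by simp
    next
      case 2
      have "w = hi q" by (rule injr[OF that(2) conjunct1[OF conjunct2[OF en]] 2])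
      then show ?thesis using r(2) by simp
    qed
  qed
  have D: "path_image (crv e) \<inter> path_image (crv e') \<subseteq> pos ` (e \<inter> e')"
    if "e\<in>E" "e'\<in>E" "e\<noteq>e'" for e e'
  proof
    fix z assume z: "z \<in> path_image (crv e) \<inter> path_image (crv e')"
    define q where "q = rr e"
    define q' where "q' = rr e'"
    have r: "q \<in> R" "e = {lo q, hi q}"
      using rr[OF that(1)] unfolding q_def by (rule conjunct1, rule conjunct2)
    have r': "q' \<in> R" "e' = {lo q', hi q'}"
      using rr[OF that(2)] unfolding q'_def by (rule conjunct1, rule conjunct2)
    have ce: "crv e = bcurve (real (f (lo q))) (real (f (hi q))) (pg q)"
      and ce': "crv e' = bcurve (real (f (lo q'))) (real (f (hi q'))) (pg q')"
      by (simp_all add: crv_def q_def q'_def)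
    define a where "a = real (f (lo q))"
    define b where "b = real (f (hi q))"
    define a' where "a' = real (f (lo q'))"
    define b' where "b' = real (f (hi q'))"
    note en = ends[OF r(1)] and en' = ends[OF r'(1)]
    have lt: "a < b" "a' < b'" using en en' by (simp_all add: a_def b_def a'_def b'_def)
    obtain x where x: "a \<le> x" "x \<le> b"
      "z = mk x ((if pg q then 1 else -1) * ((x - a) * (b - x)))"
      using bcurve_image[OF lt(1), of z "pg q"] z by (auto simp: ce a_def b_def)
    obtain x' where x': "a' \<le> x'" "x' \<le> b'"
      "z = mk x' ((if pg q' then 1 else -1) * ((x' - a') * (b' - x')))"
      using bcurve_image[OF lt(2), of z "pg q'"] z by (auto simp: ce' a'_def b'_def)
    have xx: "x' = x" using x x' by simp
    have eqy: "(if pg q then 1 else -1) * ((x - a) * (b - x))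
        = (if pg q' then 1 else -1) * ((x - a') * (b' - x))" using x x' xx by simp
    have same: "(if pg q then 1 else (-1::real)) = (if pg q' then 1 else -1)
          \<Longrightarrow> pg q = pg q'" by (auto split: if_splits)
    have ne: "\<not>(a = a' \<and> b = b')"
    proof
      assume "a = a' \<and> b = b'"
      then have "lo q = lo q'" "hi q = hi q'"
        using injr en en' by (auto simp: a_def b_def a'_def b'_def)
      then show False using r r' that(3) by simp
    qed
    have res: "(x=a \<or> x=b) \<and> (x=a' \<or> x=b')"
      apply (rule two_arcs[OF lt x(1,2) x'(1,2)[unfolded xx] eqy])
      using ni[OF r(1) r'(1)] ni[OF r'(1) r(1)] ne same
      by (auto simp: a_def b_def a'_def b'_def)
    have z0: "z = mk x 0" using x res by auto
    from res obtain w where w: "w \<in> e" "real (f w) = x"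
      using r by (auto simp: a_def b_def)
    from res obtain w' where w': "w' \<in> e'" "real (f w') = x"
      using r' by (auto simp: a'_def b'_def)
    have wV: "w \<in> V" using w(1) EV[OF that(1)] by blast
    have wV': "w' \<in> V" using w'(1) EV[OF that(2)] by blast
    have "real (f w) = real (f w')" using w(2) w'(2) by simp
    from injr[OF wV wV' this] have "w = w'" .
    then show "z \<in> pos ` (e \<inter> e')" using w w' z0 by (auto simp: pos_def)
  qed
  show ?thesis unfolding planar_graph_def
    apply (rule exI[of _ pos], rule exI[of _ crv])
    apply (intro conjI)
    subgoal by (rule A)
    subgoal by (intro ballI) (rule B)
    subgoal by (intro ballI impI) (rule C)
    subgoal by (intro ballI impI) (rule D)
    done
qed


definition vtx :: "nat \<Rightarrow> nat \<Rightarrow> (nat \<times> nat) \<times> nat" where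
  "vtx k j = ((k mod 3, j), k mod 2)"

definition suc6 :: "nat \<Rightarrow> nat" where "suc6 k = (if k = 5 then 0 else k + 1)"

definition blk :: "nat \<Rightarrow> nat \<Rightarrow> nat" where "blk i b = (3*b + 4*i) mod 6"

lemma k6_cases: "(k::nat) < 6 \<Longrightarrow> k = 0 \<or> k = 1 \<or> k = 2 \<or> k = 3 \<or> k = 4 \<or> k = 5"
  by auto

lemma suc6_lt: "k < 6 \<Longrightarrow> suc6 k < 6" by (simp add: suc6_def)

lemma blk_of_vtx: "k < 6 \<Longrightarrow> blk (k mod 3) (k mod 2) = k"
  unfolding blk_def by (drule k6_cases) (elim disjE; simp)

lemma vtx_inj: "k < 6 \<Longrightarrow> k' < 6 \<Longrightarrow> vtx k j = vtx k' j' \<longleftrightarrow> k = k' \<and> j = j'"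
  unfolding vtx_def by (metis blk_of_vtx prod.inject)

lemma blk_vtx: "i < 3 \<Longrightarrow> b < 2 \<Longrightarrow> vtx (blk i b) j = ((i, j), b) \<and> blk i b < 6"
proof -
  assume "i < 3" "b < 2"
  then have "i = 0 \<or> i = 1 \<or> i = 2" "b = 0 \<or> b = 1" by auto
  then show ?thesis unfolding vtx_def blk_def by (elim disjE; simp)
qed


lemma V_eq: "kron_vertices (Knnn_vertices n) K2_vertices = {vtx k j | k j. k < 6 \<and> j < n}"
proof (intro set_eqI iffI)
  fix x assume "x \<in> kron_vertices (Knnn_vertices n) K2_vertices"
  then obtain i j b where x: "x = ((i,j),b)" "i < 3" "j < n" "b < 2"
    by (auto simp: kron_vertices_def Knnn_vertices_def K2_vertices_def)
  then have "x = vtx (blk i b) j" "blk i b < 6" using blk_vtx[of i b j] by auto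
  then show "x \<in> {vtx k j | k j. k < 6 \<and> j < n}" using x(3) by blast
next
  fix x assume "x \<in> {vtx k j | k j. k < 6 \<and> j < n}"
  then show "x \<in> kron_vertices (Knnn_vertices n) K2_vertices"
    by (auto simp: kron_vertices_def Knnn_vertices_def K2_vertices_def vtx_def)
qed

lemma adj_cases: "k < 6 \<Longrightarrow> k' < 6 \<Longrightarrow> k mod 3 \<noteq> k' mod 3 \<Longrightarrow> k mod 2 \<noteq> k' mod 2
   \<Longrightarrow> k' = suc6 k \<or> k = suc6 k'"
  unfolding suc6_def by (drule k6_cases, drule k6_cases) (elim disjE; simp)

lemma E_eq: "kron_edges (Knnn_edges n) K2_edges =
   {{vtx k j, vtx (suc6 k) j'} | k j j'. k < 6 \<and> j < n \<and> j' < n}"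
proof (intro set_eqI iffI)
  fix x assume "x \<in> kron_edges (Knnn_edges n) K2_edges"
  then obtain g h g' h' where x: "x = {(g,h),(g',h')}" "{g,g'} \<in> Knnn_edges n" "{h,h'} = {0,1}"
    by (auto simp: kron_edges_def K2_edges_def)
  from x(2) obtain u v where uv: "{g,g'} = {u,v}" "u \<in> Knnn_vertices n" "v \<in> Knnn_vertices n"
    "fst u \<noteq> fst v" by (auto simp: Knnn_edges_def)
  have gg: "g \<in> Knnn_vertices n" "g' \<in> Knnn_vertices n" "fst g \<noteq> fst g'"
    using uv by (auto simp: doubleton_eq_iff)
  have hh: "h < 2" "h' < 2" "h \<noteq> h'" using x(3) by (auto simp: doubleton_eq_iff)
  obtain i j where g: "g = (i,j)" "i < 3" "j < n" using gg by (auto simp: Knnn_vertices_def)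
  obtain i' j' where g': "g' = (i',j')" "i' < 3" "j' < n" using gg by (auto simp: Knnn_vertices_def)
  define k where "k = blk i h"
  define k' where "k' = blk i' h'"
  have vk: "vtx k j = (g,h)" "k < 6" using blk_vtx[of i h j] g hh by (auto simp: k_def)
  have vk': "vtx k' j' = (g',h')" "k' < 6" using blk_vtx[of i' h' j'] g' hh by (auto simp: k'_def)
  have "k mod 3 \<noteq> k' mod 3" "k mod 2 \<noteq> k' mod 2"
    using vk vk' gg hh g g' by (auto simp: vtx_def)
  then have "k' = suc6 k \<or> k = suc6 k'" using adj_cases vk vk' by blast
  then show "x \<in> {{vtx k j, vtx (suc6 k) j'} | k j j'. k < 6 \<and> j < n \<and> j' < n}"
  proof
    assume "k' = suc6 k"
    then have "x = {vtx k j, vtx (suc6 k) j'}" using x(1) vk vk' by simp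
    then show ?thesis using vk g g' by blast
  next
    assume "k = suc6 k'"
    then have "x = {vtx k' j', vtx (suc6 k') j}" using x(1) vk vk' by (simp add: insert_commute)
    then show ?thesis using vk' g g' by blast
  qed
next
  fix x assume "x \<in> {{vtx k j, vtx (suc6 k) j'} | k j j'. k < 6 \<and> j < n \<and> j' < n}"
  then obtain k j j' where x: "x = {vtx k j, vtx (suc6 k) j'}" "k < 6" "j < n" "j' < n" by blast
  have a: "k mod 3 \<noteq> suc6 k mod 3" "{k mod 2, suc6 k mod 2} = {0, 1}" "suc6 k mod 3 < 3" "k mod 3 < 3"
    using k6_cases[OF x(2)] by (auto simp: suc6_def)
  have "{(k mod 3, j), (suc6 k mod 3, j')} \<in> Knnn_edges n"
    unfolding Knnn_edges_def Knnn_vertices_def using a x by auto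
  then show "x \<in> kron_edges (Knnn_edges n) K2_edges"
    unfolding kron_edges_def K2_edges_def x(1) vtx_def using a(2) by blast
qed

lemma edge_uniq:
  assumes "k < 6" "k2 < 6" "{vtx k j, vtx (suc6 k) j'} = {vtx k2 j2, vtx (suc6 k2) j2'}"
  shows "k = k2 \<and> j = j2 \<and> j' = j2'"
proof -
  have s: "suc6 k < 6" "suc6 k2 < 6" using assms suc6_lt by auto
  from assms(3) consider "vtx k j = vtx k2 j2 \<and> vtx (suc6 k) j' = vtx (suc6 k2) j2'"
    | "vtx k j = vtx (suc6 k2) j2' \<and> vtx (suc6 k) j' = vtx k2 j2"
    by (auto simp: doubleton_eq_iff)
  then show ?thesis
  proof cases
    case 1 then show ?thesis using vtx_inj[OF assms(1) assms(2)] vtx_inj[OF s] by simp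
  next
    case 2
    then have h1: "vtx k j = vtx (suc6 k2) j2'" and h2: "vtx (suc6 k) j' = vtx k2 j2" by auto
    from h1 vtx_inj[OF assms(1) s(2)] have "k = suc6 k2" by simp
    moreover from h2 vtx_inj[OF s(1) assms(2)] have "suc6 k = k2" by simp
    ultimately have False using k6_cases[OF assms(1)] by (auto simp: suc6_def)
    then show ?thesis ..
  qed
qed


definition hp :: "nat \<Rightarrow> nat \<Rightarrow> nat \<Rightarrow> nat" where
  "hp p k c = k*(4*p+2) + (if c = k mod 2 then 0 else 4*p+1)"

definition LOn :: "nat \<Rightarrow> nat \<times> nat \<times> nat \<Rightarrow> nat" where
  "LOn p r = (case r of (tg,k,x) \<Rightarrow> if tg = 0 then k*(4*p+2) else if tg = 1 then k*(4*p+2)+1+x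
      else hp p (if k = 5 then 0 else k) x)"

definition HIn :: "nat \<Rightarrow> nat \<times> nat \<times> nat \<Rightarrow> nat" where
  "HIn p r = (case r of (tg,k,x) \<Rightarrow> if tg = 0 then k*(4*p+2)+1+x else if tg = 1 then k*(4*p+2)+(4*p+1)
      else hp p (if k = 5 then 5 else k+1) x)"

definition pgt :: "nat \<times> nat \<times> nat \<Rightarrow> bool" where
  "pgt r = (case r of (tg,k,x) \<Rightarrow> if tg = 0 then False else if tg = 1 then True else (x = 1 \<and> odd k))"

definition Rt :: "nat \<Rightarrow> nat \<Rightarrow> (nat \<times> nat \<times> nat) set" where
  "Rt p t = {(0,k,x) | k x. k<6 \<and> x<4*p \<and> x div 2 \<noteq> t} \<union> {(1,k,x) | k x. k<6 \<and> x<4*p \<and> x div 2 \<noteq> t}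
     \<union> {(2,k,c) | k c. k<6 \<and> c<2}"

lemma c2_cases: "(c::nat) < 2 \<Longrightarrow> c = 0 \<or> c = 1" by auto

lemma ni_arith:
  assumes "r \<in> Rt p t" "r' \<in> Rt p t" "pgt r = pgt r'"
    "LOn p r < LOn p r'" "LOn p r' < HIn p r" "HIn p r < HIn p r'"
  shows False
proof -
  obtain tg k x where r: "r = (tg,k,x)" by (cases r) auto
  obtain tg' k' x' where r': "r' = (tg',k',x')" by (cases r') auto
  have k: "k < 6" "k' < 6" using assms(1,2) by (auto simp: Rt_def r r')
  consider (a) "tg = 0" "x < 4*p" | (b) "tg = 1" "x < 4*p" | (c) "tg = 2" "x < 2"
    using assms(1) by (auto simp: Rt_def r)
  then show False
  proof cases
    case a
    consider (a) "tg' = 0" "x' < 4*p" | (b) "tg' = 1" "x' < 4*p" | (c) "tg' = 2" "x' < 2"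
      using assms(2) by (auto simp: Rt_def r')
    then show False
    proof cases
      case a': a
      show False using assms(4-6) k6_cases[OF k(1)] k6_cases[OF k(2)] a a'
        by (simp add: r r' LOn_def HIn_def) (elim disjE; simp; linarith)
    next
      case b' : b then show False using assms(3) a by (simp add: r r' pgt_def)
    next
      case c' : c
      show False using assms(3-6) k6_cases[OF k(1)] k6_cases[OF k(2)] c2_cases[OF c'(2)] a c'
        by (simp add: r r' LOn_def HIn_def pgt_def hp_def) (elim disjE; simp; linarith)
    qed
  next
    case b
    consider (a) "tg' = 0" "x' < 4*p" | (b) "tg' = 1" "x' < 4*p" | (c) "tg' = 2" "x' < 2"
      using assms(2) by (auto simp: Rt_def r')
    then show False
    proof cases
      case a' : a then show False using assms(3) b by (simp add: r r' pgt_def)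
    next
      case b' : b
      show False using assms(4-6) k6_cases[OF k(1)] k6_cases[OF k(2)] b b'
        by (simp add: r r' LOn_def HIn_def) (elim disjE; simp; linarith)
    next
      case c' : c
      show False using assms(3-6) k6_cases[OF k(1)] k6_cases[OF k(2)] c2_cases[OF c'(2)] b c'
        by (simp add: r r' LOn_def HIn_def pgt_def hp_def) (elim disjE; simp; linarith)
    qed
  next
    case c
    consider (a) "tg' = 0" "x' < 4*p" | (b) "tg' = 1" "x' < 4*p" | (c) "tg' = 2" "x' < 2"
      using assms(2) by (auto simp: Rt_def r')
    then show False
    proof cases
      case a' : a
      show False using assms(3-6) k6_cases[OF k(1)] k6_cases[OF k(2)] c2_cases[OF c(2)] c a'
        by (simp add: r r' LOn_def HIn_def pgt_def hp_def) (elim disjE; simp; linarith)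
    next
      case b' : b
      show False using assms(3-6) k6_cases[OF k(1)] k6_cases[OF k(2)] c2_cases[OF c(2)] c b'
        by (simp add: r r' LOn_def HIn_def pgt_def hp_def) (elim disjE; simp; linarith)
    next
      case c' : c
      show False using assms(3-6) k6_cases[OF k(1)] k6_cases[OF k(2)] c2_cases[OF c(2)] c2_cases[OF c'(2)] c c'
        by (simp add: r r' LOn_def HIn_def pgt_def hp_def) (elim disjE; simp; linarith)
    qed
  qed
qed


definition P :: "nat \<Rightarrow> nat \<Rightarrow> nat \<Rightarrow> nat \<Rightarrow> nat" where
  "P p t k j = (if j div 2 = t then hp p k (j mod 2) else ((k+5) mod 6)*(4*p+2) + 1 + j)"

definition fpos :: "nat \<Rightarrow> nat \<Rightarrow> (nat \<times> nat) \<times> nat \<Rightarrow> nat" where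
  "fpos p t v = P p t (blk (fst (fst v)) (snd v)) (snd (fst v))"

definition lot :: "nat \<Rightarrow> nat \<times> nat \<times> nat \<Rightarrow> (nat \<times> nat) \<times> nat" where
  "lot t r = (case r of (tg,k,x) \<Rightarrow> if tg = 0 then vtx k (2*t + k mod 2) else if tg = 1 then vtx (suc6 k) x
     else vtx (if k = 5 then 0 else k) (2*t + x))"

definition hit :: "nat \<Rightarrow> nat \<times> nat \<times> nat \<Rightarrow> (nat \<times> nat) \<times> nat" where
  "hit t r = (case r of (tg,k,x) \<Rightarrow> if tg = 0 then vtx (suc6 k) x else if tg = 1 then vtx k (2*t + 1 - k mod 2)
     else vtx (if k = 5 then 5 else k + 1) (2*t + x))"

definition Vs :: "nat \<Rightarrow> ((nat \<times> nat) \<times> nat) set" where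
  "Vs p = {vtx k j | k j. k < 6 \<and> j < 4*p}"

lemma fpos_vtx: "k < 6 \<Longrightarrow> fpos p t (vtx k j) = P p t k j"
  by (simp add: fpos_def vtx_def blk_of_vtx)

lemma suc6_pred: "k < 6 \<Longrightarrow> (suc6 k + 5) mod 6 = k"
  by (auto simp: suc6_def)

lemma lohi:
  assumes t: "t < 2*p" and r: "r \<in> Rt p t"
  shows "fpos p t (lot t r) = LOn p r \<and> fpos p t (hit t r) = HIn p r \<and> lot t r \<in> Vs p \<and> hit t r \<in> Vs p"
proof -
  obtain tg k x where rr: "r = (tg,k,x)" by (cases r) auto
  have k: "k < 6" "suc6 k < 6" using r suc6_lt by (auto simp: Rt_def rr)
  consider (a) "tg = 0" "x < 4*p" "x div 2 \<noteq> t" | (b) "tg = 1" "x < 4*p" "x div 2 \<noteq> t"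
    | (c) "tg = 2" "x < 2"
    using r by (auto simp: Rt_def rr)
  then show ?thesis
  proof cases
    case a
    have m: "(2*t + k mod 2) div 2 = t" "(2*t + k mod 2) mod 2 = k mod 2" "2*t + k mod 2 < 4*p"
      using t by auto
    show ?thesis using a k m
      by (auto simp: rr lot_def hit_def LOn_def HIn_def fpos_vtx P_def hp_def suc6_pred Vs_def)
  next
    case b
    have m: "(2*t + 1 - k mod 2) div 2 = t" "(2*t + 1 - k mod 2) mod 2 \<noteq> k mod 2" "2*t + 1 - k mod 2 < 4*p"
      using t by (cases "k mod 2 = 0"; simp; presburger)+
    show ?thesis using b k m
      by (auto simp: rr lot_def hit_def LOn_def HIn_def fpos_vtx P_def hp_def suc6_pred Vs_def)
  next
    case c
    have m: "(2*t + x) div 2 = t" "(2*t + x) mod 2 = x" "2*t + x < 4*p"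
      using t c by auto
    have k2: "(if k = 5 then 0 else k) < 6" "(if k = 5 then 5 else k+1) < 6" using k by auto
    have "vtx (if k = 5 then 0 else k) (2*t + x) \<in> Vs p" "vtx (if k = 5 then 5 else k+1) (2*t + x) \<in> Vs p"
      using k2 m(3) unfolding Vs_def by blast+
    then show ?thesis using c k k2 m
      by (simp add: rr lot_def hit_def LOn_def HIn_def fpos_vtx P_def)
  qed
qed

lemma lo_lt_hi: "r \<in> Rt p t \<Longrightarrow> LOn p r < HIn p r"
proof -
  assume r: "r \<in> Rt p t"
  obtain tg k x where rr: "r = (tg,k,x)" by (cases r) auto
  have k: "k < 6" using r by (auto simp: Rt_def rr)
  consider (a) "tg = 0" "x < 4*p" | (b) "tg = 1" "x < 4*p" | (c) "tg = 2" "x < 2"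
    using r by (auto simp: Rt_def rr)
  then show ?thesis
  proof cases
    case a then show ?thesis by (simp add: rr LOn_def HIn_def)
  next
    case b then show ?thesis by (simp add: rr LOn_def HIn_def)
  next
    case c
    show ?thesis using k6_cases[OF k] c2_cases[OF c(2)] c
      by (simp add: rr LOn_def HIn_def hp_def)
  qed
qed


lemma P_inj:
  assumes k: "k < 6" "k' < 6" and j: "j < 4*p" "j' < 4*p" and eq: "P p t k j = P p t k' j'"
  shows "k = k' \<and> j = j'"
proof -
  have jm: "j mod 2 < 2" "j' mod 2 < 2" by auto
  have jj: "j = 2*(j div 2) + j mod 2" "j' = 2*(j' div 2) + j' mod 2" by auto
  show ?thesis
  proof (cases "j div 2 = t")
    case T1: True
    show ?thesis
    proof (cases "j' div 2 = t")
      case T2: True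
      have "k = k' \<and> j mod 2 = j' mod 2"
        using eq T1 T2 k6_cases[OF k(1)] k6_cases[OF k(2)] c2_cases[OF jm(1)] c2_cases[OF jm(2)]
        by (simp add: P_def hp_def) (elim disjE; simp; linarith)
      then show ?thesis using jj T1 T2 by metis
    next
      case F2: False
      have False
        using eq T1 F2 j k6_cases[OF k(1)] k6_cases[OF k(2)] c2_cases[OF jm(1)]
        by (simp add: P_def hp_def) (elim disjE; simp; linarith)
      then show ?thesis ..
    qed
  next
    case F1: False
    show ?thesis
    proof (cases "j' div 2 = t")
      case T2: True
      have False
        using eq F1 T2 j k6_cases[OF k(1)] k6_cases[OF k(2)] c2_cases[OF jm(2)]
        by (simp add: P_def hp_def) (elim disjE; simp; linarith)
      then show ?thesis ..
    next
      case F2: False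
      show ?thesis
        using eq F1 F2 j k6_cases[OF k(1)] k6_cases[OF k(2)]
        by (simp add: P_def) (elim disjE; simp; linarith)
    qed
  qed
qed

lemma fpos_inj: "inj_on (fpos p t) (Vs p)"
proof (rule inj_onI)
  fix u v assume "u \<in> Vs p" "v \<in> Vs p" "fpos p t u = fpos p t v"
  then obtain k j k' j' where "u = vtx k j" "v = vtx k' j'" "k < 6" "j < 4*p" "k' < 6" "j' < 4*p"
    "P p t k j = P p t k' j'" unfolding Vs_def by (auto simp: fpos_vtx)
  then show "u = v" using P_inj by metis
qed

definition pc :: "nat \<Rightarrow> nat \<Rightarrow> nat \<Rightarrow> nat" where
  "pc p j j' = (if j div 2 \<noteq> j' div 2 \<or> j mod 2 = j' mod 2 then j div 2 else 2*p)"

definition Es :: "nat \<Rightarrow> nat \<Rightarrow> ((nat \<times> nat) \<times> nat) set set" where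
  "Es p i = {{vtx k j, vtx (suc6 k) j'} | k j j'. k < 6 \<and> j < 4*p \<and> j' < 4*p \<and> pc p j j' = i}"

lemma Es_t:
  assumes t: "t < 2*p"
  shows "Es p t = (\<lambda>r. {lot t r, hit t r}) ` Rt p t"
proof (intro set_eqI iffI)
  fix e assume "e \<in> Es p t"
  then obtain k j j' where e: "e = {vtx k j, vtx (suc6 k) j'}" "k < 6" "j < 4*p" "j' < 4*p"
    "pc p j j' = t" unfolding Es_def by blast
  have jt: "j div 2 = t" using e(5) t by (auto simp: pc_def split: if_splits)
  have jj: "j = 2*(j div 2) + j mod 2" "j' = 2*(j' div 2) + j' mod 2" by auto
  show "e \<in> (\<lambda>r. {lot t r, hit t r}) ` Rt p t"
  proof (cases "j' div 2 = t")
    case False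
    show ?thesis
    proof (cases "j mod 2 = k mod 2")
      case True
      have "j = 2*t + k mod 2" using jj jt True by simp
      then have "e = {lot t (0,k,j'), hit t (0,k,j')}" "(0,k,j') \<in> Rt p t"
        using e False by (auto simp: lot_def hit_def Rt_def)
      then show ?thesis by blast
    next
      case F: False
      have lt2: "j mod 2 < 2" "k mod 2 < 2" by auto
      have "j mod 2 = 1 - k mod 2" using F c2_cases[OF lt2(1)] c2_cases[OF lt2(2)] by auto
      then have "j = 2*t + 1 - k mod 2" using jj jt lt2 by linarith
      then have "e = {lot t (1,k,j'), hit t (1,k,j')}" "(1,k,j') \<in> Rt p t"
        using e False by (auto simp: lot_def hit_def Rt_def insert_commute)
      then show ?thesis by blast
    qed
  next
    case True
    then have "j mod 2 = j' mod 2" using e(5) jt t by (auto simp: pc_def split: if_splits)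
    then have jq: "j = 2*t + j mod 2" "j' = 2*t + j mod 2" using jj jt True by simp_all
    have "(2,k,j mod 2) \<in> Rt p t" using e(2) by (auto simp: Rt_def)
    moreover have "e = {lot t (2,k,j mod 2), hit t (2,k,j mod 2)}"
    proof (cases "k = 5")
      case True
      then show ?thesis using e(1) jq by (simp add: lot_def hit_def suc6_def insert_commute)
    next
      case False
      then show ?thesis using e(1) jq by (simp add: lot_def hit_def suc6_def)
    qed
    ultimately show ?thesis by blast
  qed
next
  fix e assume "e \<in> (\<lambda>r. {lot t r, hit t r}) ` Rt p t"
  then obtain r where r: "r \<in> Rt p t" "e = {lot t r, hit t r}" by blast
  obtain tg k x where rr: "r = (tg,k,x)" by (cases r) auto
  have k: "k < 6" using r by (auto simp: Rt_def rr)
  consider (a) "tg = 0" "x < 4*p" "x div 2 \<noteq> t" | (b) "tg = 1" "x < 4*p" "x div 2 \<noteq> t"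
    | (c) "tg = 2" "x < 2"
    using r by (auto simp: Rt_def rr)
  then show "e \<in> Es p t"
  proof cases
    case a
    have m: "(2*t + k mod 2) div 2 = t" "2*t + k mod 2 < 4*p" using t by auto
    have "e = {vtx k (2*t + k mod 2), vtx (suc6 k) x}" "pc p (2*t + k mod 2) x = t"
      using r(2) a m by (auto simp: rr lot_def hit_def pc_def)
    then show ?thesis unfolding Es_def using k m a by blast
  next
    case b
    have m: "(2*t + 1 - k mod 2) div 2 = t" "2*t + 1 - k mod 2 < 4*p"
      using t by (cases "k mod 2 = 0"; simp; presburger)+
    have "e = {vtx k (2*t + 1 - k mod 2), vtx (suc6 k) x}" "pc p (2*t + 1 - k mod 2) x = t"
      using r(2) b m by (auto simp: rr lot_def hit_def pc_def insert_commute)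
    then show ?thesis unfolding Es_def using k m b by blast
  next
    case c
    have m: "(2*t + x) div 2 = t" "2*t + x < 4*p" using t c by auto
    have pcm: "pc p (2*t + x) (2*t + x) = t" using m by (simp add: pc_def)
    have "e = {vtx k (2*t + x), vtx (suc6 k) (2*t + x)}"
    proof (cases "k = 5")
      case True
      then show ?thesis using r(2) c by (simp add: rr lot_def hit_def suc6_def insert_commute)
    next
      case False
      then show ?thesis using r(2) c by (simp add: rr lot_def hit_def suc6_def)
    qed
    then show ?thesis unfolding Es_def using k m pcm by blast
  qed
qed

lemma planar_t:
  assumes t: "t < 2*p"
  shows "planar_graph (Vs p) (Es p t)"
proof (rule book_planar[OF fpos_inj Es_t[OF t]])
  fix r assume r: "r \<in> Rt p t"
  show "lot t r \<in> Vs p \<and> hit t r \<in> Vs p \<and> fpos p t (lot t r) < fpos p t (hit t r)"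
    using lohi[OF t r] lo_lt_hi[OF r] by simp
next
  fix r r' assume r: "r \<in> Rt p t" and r': "r' \<in> Rt p t" and pg: "pgt r = pgt r'"
    and h: "fpos p t (lot t r) < fpos p t (lot t r')" "fpos p t (lot t r') < fpos p t (hit t r)"
           "fpos p t (hit t r) < fpos p t (hit t r')"
  show False
    apply (rule ni_arith[OF r r' pg])
    using h lohi[OF t r] lohi[OF t r'] by simp_all
qed


lemma par_add: "((a::nat) + k) mod 2 = (b + k) mod 2 \<longleftrightarrow> a mod 2 = b mod 2"
  by (simp add: mod_2_eq_odd)
lemma l2: "((2*(q div 2) + ((q::nat)+k) mod 2) + k) mod 2 = q mod 2"
  by (simp add: mod_2_eq_odd)
lemma l3: "(q::nat) < 4*p \<Longrightarrow> 2*(q div 2) + (q+k) mod 2 < 4*p"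
proof -
  assume "q < 4*p"
  then have "q div 2 < 2*p" by auto
  moreover have "(q+k) mod 2 \<le> 1" by auto
  ultimately show ?thesis by linarith
qed
lemma l4: "(k::nat) < 6 \<Longrightarrow> k' < 6 \<Longrightarrow> 6*a + k = 6*b + k' \<Longrightarrow> k = k' \<and> a = b"
proof -
  assume h: "k < 6" "k' < 6" "6*a + k = 6*b + k'"
  have "(k + 6*a) mod 6 = (k' + 6*b) mod 6" using h(3) by (simp add: add.commute)
  then have "k mod 6 = k' mod 6" by simp
  then have "k = k'" using h by simp
  then show ?thesis using h by simp
qed
lemma l5: "(j::nat) mod 2 = j' mod 2 \<Longrightarrow> j div 2 = j' div 2 \<Longrightarrow> j = j'"
  by (metis div_mult_mod_eq)
lemma l7: "(j::nat) mod 2 \<noteq> j' mod 2 \<Longrightarrow> (j + k + 1) mod 2 = (j' + k) mod 2"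
  by (cases "even j'"; cases "even j"; cases "even k"; auto simp add: mod_2_eq_odd)

definition idx :: "nat \<Rightarrow> nat \<Rightarrow> nat" where "idx q k = 2*(q div 2) + (q+k) mod 2"

definition Rx :: "nat \<Rightarrow> (nat \<times> nat) set" where "Rx p = {(q,k) | q k. q < 4*p \<and> k < 6}"

definition lox :: "nat \<times> nat \<Rightarrow> (nat \<times> nat) \<times> nat" where
  "lox r = (case r of (q,k) \<Rightarrow> vtx (if k = 5 then 0 else k) (idx q (if k = 5 then 0 else k)))"

definition hix :: "nat \<times> nat \<Rightarrow> (nat \<times> nat) \<times> nat" where
  "hix r = (case r of (q,k) \<Rightarrow> vtx (if k = 5 then 5 else k+1) (idx q (if k = 5 then 5 else k+1)))"

definition fx :: "(nat \<times> nat) \<times> nat \<Rightarrow> nat" where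
  "fx v = 6*(2*(snd (fst v) div 2) + (snd (fst v) + blk (fst (fst v)) (snd v)) mod 2) + blk (fst (fst v)) (snd v)"

lemma fx_vtx: "k < 6 \<Longrightarrow> fx (vtx k j) = 6*(2*(j div 2) + (j+k) mod 2) + k"
  by (simp add: fx_def vtx_def blk_of_vtx)

lemma idx_div: "idx q k div 2 = q div 2" and idx_mod: "idx q k mod 2 = (q+k) mod 2"
  by (simp_all add: idx_def)

lemma fx_idx: "k < 6 \<Longrightarrow> fx (vtx k (idx q k)) = 6*q + k"
proof -
  assume k: "k < 6"
  have "(idx q k + k) mod 2 = q mod 2" unfolding idx_def by (rule l2)
  then show ?thesis using k by (simp add: fx_vtx idx_div)
qed

lemma idx_lt: "q < 4*p \<Longrightarrow> idx q k < 4*p"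
  unfolding idx_def by (rule l3)

lemma fx_inj: "inj_on fx (Vs p)"
proof (rule inj_onI)
  fix u v assume "u \<in> Vs p" "v \<in> Vs p" "fx u = fx v"
  then obtain k j k' j' where uv: "u = vtx k j" "v = vtx k' j'" "k < 6" "k' < 6"
    "6*(2*(j div 2) + (j+k) mod 2) + k = 6*(2*(j' div 2) + (j'+k') mod 2) + k'"
    unfolding Vs_def by (auto simp: fx_vtx)
  from l4[OF uv(3,4,5)] have kk: "k = k'" by simp
  from l4[OF uv(3,4,5)] kk have a: "idx j k = idx j' k" by (simp add: idx_def)
  have "j div 2 = j' div 2" using arg_cong[OF a, of "\<lambda>x. x div 2"] by (simp add: idx_div)
  moreover have "j mod 2 = j' mod 2" using arg_cong[OF a, of "\<lambda>x. x mod 2"] by (simp add: idx_mod par_add)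
  ultimately have "j = j'" by (rule l5[rotated])
  then show "u = v" using uv \<open>k = k'\<close> by simp
qed

lemma Es_x: "Es p (2*p) = (\<lambda>r. {lox r, hix r}) ` Rx p"
proof (intro set_eqI iffI)
  fix e assume "e \<in> Es p (2*p)"
  then obtain k j j' where e: "e = {vtx k j, vtx (suc6 k) j'}" "k < 6" "j < 4*p" "j' < 4*p"
    "pc p j j' = 2*p" unfolding Es_def by blast
  have "j div 2 < 2*p" using e(3) by auto
  then have jj: "j div 2 = j' div 2" "j mod 2 \<noteq> j' mod 2"
    using e(5) by (auto simp: pc_def split: if_splits)
  define q where "q = idx j k"
  have q: "q < 4*p" using e(3) unfolding q_def by (rule idx_lt)
  have qd: "q div 2 = j div 2" "q mod 2 = (j+k) mod 2" unfolding q_def by (simp_all add: idx_div idx_mod)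
  have ev1: "even q \<longleftrightarrow> even (j+k)" using qd(2) by (simp add: even_iff_mod_2_eq_zero)
  have ev2: "even j' \<longleftrightarrow> \<not> even j" using jj(2)
    by (cases "even j"; cases "even j'"; simp add: mod_2_eq_odd)
  have i1: "idx q k = j"
    by (rule l5) (simp_all add: idx_div idx_mod qd, simp add: q_def idx_def l2)
  have i2: "idx q (k+1) = j'"
  proof (rule l5)
    show "idx q (k+1) div 2 = j' div 2" using jj by (simp add: idx_div qd)
    show "idx q (k+1) mod 2 = j' mod 2" unfolding idx_mod using ev1 ev2
      by (cases "even j"; cases "even k"; simp add: mod_2_eq_odd)
  qed
  have i3: "idx q 0 = j'" if "k = 5"
  proof (rule l5)
    show "idx q 0 div 2 = j' div 2" using jj by (simp add: idx_div qd)
    show "idx q 0 mod 2 = j' mod 2" unfolding idx_mod using ev1 ev2 that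
      by (cases "even j"; simp add: mod_2_eq_odd)
  qed
  have "e = {lox (q,k), hix (q,k)}"
  proof (cases "k = 5")
    case True
    then show ?thesis using e(1) i1 i3 by (simp add: lox_def hix_def suc6_def insert_commute)
  next
    case False
    then show ?thesis using e(1) i1 i2 by (simp add: lox_def hix_def suc6_def)
  qed
  moreover have "(q,k) \<in> Rx p" using q e(2) by (simp add: Rx_def)
  ultimately show "e \<in> (\<lambda>r. {lox r, hix r}) ` Rx p" by blast
next
  fix e assume "e \<in> (\<lambda>r. {lox r, hix r}) ` Rx p"
  then obtain q k where r: "q < 4*p" "k < 6" "e = {lox (q,k), hix (q,k)}" by (auto simp: Rx_def)
  have "(q + k) mod 2 \<noteq> (q + suc6 k) mod 2"
    by (cases "k = 5"; cases "even q"; cases "even k"; simp add: suc6_def mod_2_eq_odd)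
  then have pcx: "pc p (idx q k) (idx q (suc6 k)) = 2*p"
    unfolding pc_def by (simp add: idx_div idx_mod)
  have "e = {vtx k (idx q k), vtx (suc6 k) (idx q (suc6 k))}"
  proof (cases "k = 5")
    case True
    then show ?thesis using r(3) by (simp add: lox_def hix_def suc6_def insert_commute)
  next
    case False
    then show ?thesis using r(3) by (simp add: lox_def hix_def suc6_def)
  qed
  then show "e \<in> Es p (2*p)" unfolding Es_def using r(1,2) idx_lt[OF r(1)] pcx by blast
qed

lemma planar_x: "planar_graph (Vs p) (Es p (2*p))"
proof (rule book_planar[OF fx_inj Es_x, where pg = "\<lambda>_. False"])
  fix r assume r: "r \<in> Rx p"
  then obtain q k where rr: "r = (q,k)" "q < 4*p" "k < 6" by (auto simp: Rx_def)
  have a: "(if k = 5 then 0 else k) < 6" "(if k = 5 then 5 else k+1) < 6" using rr by auto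
  have mem: "vtx k0 (idx q k0) \<in> Vs p" if "k0 < 6" for k0
    using idx_lt[OF rr(2)] that unfolding Vs_def by blast
  have "lox r \<in> Vs p" "hix r \<in> Vs p"
    unfolding lox_def hix_def rr(1) using mem[OF a(1)] mem[OF a(2)] by simp_all
  moreover have "fx (lox r) < fx (hix r)"
    unfolding lox_def hix_def rr(1) using fx_idx[OF a(1)] fx_idx[OF a(2)] by (simp add: rr)
  ultimately show "lox r \<in> Vs p \<and> hix r \<in> Vs p \<and> fx (lox r) < fx (hix r)" by blast
next
  fix r r' assume r: "r \<in> Rx p" and r': "r' \<in> Rx p"
    and h: "fx (lox r) < fx (lox r')" "fx (lox r') < fx (hix r)" "fx (hix r) < fx (hix r')"
  obtain q k where rr: "r = (q,k)" "k < 6" using r by (auto simp: Rx_def)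
  obtain q' k' where rr': "r' = (q',k')" "k' < 6" using r' by (auto simp: Rx_def)
  have a: "(if k = 5 then 0 else k) < 6" "(if k = 5 then 5 else k+1) < 6"
      "(if k' = 5 then 0 else k') < 6" "(if k' = 5 then 5 else k'+1) < 6" using rr rr' by auto
  have "6*q + (if k = 5 then 0 else k) < 6*q' + (if k' = 5 then 0 else k')"
       "6*q' + (if k' = 5 then 0 else k') < 6*q + (if k = 5 then 5 else k+1)"
       "6*q + (if k = 5 then 5 else k+1) < 6*q' + (if k' = 5 then 5 else k'+1)"
    using h unfolding lox_def hix_def rr(1) rr'(1)
    using fx_idx[OF a(1)] fx_idx[OF a(2)] fx_idx[OF a(3)] fx_idx[OF a(4)] by simp_all
  then show False using k6_cases[OF rr(2)] k6_cases[OF rr'(2)]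
    by (elim disjE; simp; presburger)
qed


theorem lemma4p2:
  fixes p :: nat
  assumes "p \<ge> 1"
  defines "V \<equiv> kron_vertices (Knnn_vertices (4 * p)) K2_vertices"
      and "E \<equiv> kron_edges (Knnn_edges (4 * p)) K2_edges"
  shows "(\<exists>Es :: nat \<Rightarrow> ((nat \<times> nat) \<times> nat) set set.
            (\<forall>i<2 * p + 1. Es i \<subseteq> E \<and> planar_graph V (Es i)) \<and>
            disjoint_family_on Es {..<2 * p + 1} \<and>
            (\<Union>i<2 * p + 1. Es i) = E)
         \<and> thickness V E \<le> 2 * p + 1"
proof -
  have VV: "V = Vs p" unfolding V_def V_eq Vs_def by simp
  have EE: "E = {{vtx k j, vtx (suc6 k) j'} | k j j'. k < 6 \<and> j < 4*p \<and> j' < 4*p}"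
    unfolding E_def E_eq by simp
  have sub: "Es p i \<subseteq> E" for i unfolding EE Es_def by blast
  have pl: "planar_graph V (Es p i)" if "i < 2*p+1" for i
  proof (cases "i < 2*p")
    case True then show ?thesis using planar_t VV by simp
  next
    case False then have "i = 2*p" using that by simp
    then show ?thesis using planar_x VV by simp
  qed
  have dj: "disjoint_family_on (Es p) {..<2 * p + 1}"
    unfolding disjoint_family_on_def
  proof (intro ballI impI)
    fix i i' assume "i \<in> {..<2*p+1}" "i' \<in> {..<2*p+1}" "i \<noteq> i'"
    show "Es p i \<inter> Es p i' = {}"
    proof (rule ccontr)
      assume "Es p i \<inter> Es p i' \<noteq> {}"
      then obtain e where e1: "e \<in> Es p i" and e2: "e \<in> Es p i'" by blast
      from e1 obtain k j j' where a: "e = {vtx k j, vtx (suc6 k) j'}" "k < 6" "pc p j j' = i"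
        unfolding Es_def by blast
      from e2 obtain k2 j2 j2' where b: "e = {vtx k2 j2, vtx (suc6 k2) j2'}" "k2 < 6" "pc p j2 j2' = i'"
        unfolding Es_def by blast
      have "{vtx k j, vtx (suc6 k) j'} = {vtx k2 j2, vtx (suc6 k2) j2'}" using a(1) b(1) by simp
      then have "k = k2 \<and> j = j2 \<and> j' = j2'" by (rule edge_uniq[OF a(2) b(2)])
      then show False using a(3) b(3) \<open>i \<noteq> i'\<close> by simp
    qed
  qed
  have un: "(\<Union>i<2 * p + 1. Es p i) = E"
  proof
    show "(\<Union>i<2 * p + 1. Es p i) \<subseteq> E" using sub by blast
  next
    show "E \<subseteq> (\<Union>i<2 * p + 1. Es p i)"
    proof
      fix e assume "e \<in> E"
      then obtain k j j' where e: "e = {vtx k j, vtx (suc6 k) j'}" "k < 6" "j < 4*p" "j' < 4*p"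
        unfolding EE by blast
      have "j div 2 < 2*p" using e(3) by auto
      then have "pc p j j' < 2*p+1" by (simp add: pc_def)
      moreover have "e \<in> Es p (pc p j j')" unfolding Es_def using e by blast
      ultimately show "e \<in> (\<Union>i<2 * p + 1. Es p i)" by blast
    qed
  qed
  have ex: "\<exists>Es :: nat \<Rightarrow> ((nat \<times> nat) \<times> nat) set set.
            (\<forall>i<2 * p + 1. Es i \<subseteq> E \<and> planar_graph V (Es i)) \<and>
            disjoint_family_on Es {..<2 * p + 1} \<and>
            (\<Union>i<2 * p + 1. Es i) = E"
    using sub pl dj un by blast
  have "thickness V E \<le> 2*p+1"
    unfolding thickness_def
  proof (rule Least_le)
    show "\<exists>Es :: nat \<Rightarrow> ((nat \<times> nat) \<times> nat) set set.
      (\<forall>i<2*p+1. Es i \<subseteq> E \<and> planar_graph V (Es i)) \<and> (\<Union>i<2*p+1. Es i) = E"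
      using ex by blast
  qed
  with ex show ?thesis by blast
qed

end
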